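(* Let $d\ge2$. For any feed-forward neural network architecture $\mathcal{A}$ with $d$ input neurons and the Heaviside activation $\sigma(x)=\mathds{1}_{x\ge0}$, the set $H_{\mathcal{A}}$ satisfies \[ \sup_{f \in \mathcal{M}^d} \inf_{g \in H_{\mathcal{A}}} \|f - g\|_{\infty} \geq \frac{1}{2}, \] where $\|\cdot\|_\infty$ is the sup norm on $[0,1]^d$.
   Context: $\mathcal{M}^d$ is the set of all functions $f:[0,1]^d\to[0,1]$ that are non-decreasing in the sense that $x_i\le y_i$ for all $i=1,\dots,d$ implies $f(x)\le f(y)$. A feed-forward architecture $\mathcal{A}$ is a directed acyclic graph with $d$ input nodes (in-degree $0$), a single output node (out-degree $0$), skip connections allowed; a real weight is attached to every edge and every non-input node. For weights $\mathbf w$, input neuron $v$ outputs $x_v$, each hidden neuron outputs $\sigma(\sum_{u\in P_v}w_{u\to v}y_u+w_v)$ ($P_v$ = predecessors), the output neuron outputs $\sum_{u\in P_v}w_{u\to v}y_u+w_v$; $H_{\mathcal{A}}$ is the set of all functions on $[0,1]^d$ so computed over all weight vectors. *)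

theory Defs
  imports "HOL-Analysis.Analysis"
begin

text \<open>Points of [0,1]^d are encoded as functions nat => real with coordinates
  0..d-1 in [0,1] and all other coordinates equal to 0.\<close>
definition unit_cube :: "nat \<Rightarrow> (nat \<Rightarrow> real) set" where
  "unit_cube d = {x. (\<forall>i<d. 0 \<le> x i \<and> x i \<le> 1) \<and> (\<forall>i\<ge>d. x i = 0)}"

definition monotone_class :: "nat \<Rightarrow> ((nat \<Rightarrow> real) \<Rightarrow> real) set" where
  "monotone_class d = {f. (\<forall>x\<in>unit_cube d. 0 \<le> f x \<and> f x \<le> 1) \<and>
     (\<forall>x\<in>unit_cube d. \<forall>y\<in>unit_cube d. (\<forall>i<d. x i \<le> y i) \<longrightarrow> f x \<le> f y)}"

definition heaviside :: "real \<Rightarrow> real" where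
  "heaviside t = (if t \<ge> 0 then 1 else 0)"

text \<open>Architecture: nodes 0..N-1 numbered in a topological order; nodes 0..d-1 are the
  input nodes (exactly the nodes of in-degree 0), node N-1 is the output node (the unique
  node of out-degree 0); E is the edge set.  Every finite DAG with these properties is
  isomorphic to one numbered this way.\<close>
definition architecture :: "nat \<Rightarrow> nat \<Rightarrow> (nat \<times> nat) set \<Rightarrow> bool" where
  "architecture d N E \<longleftrightarrow> d < N \<and>
     (\<forall>(u,v)\<in>E. u < v \<and> d \<le> v \<and> v < N) \<and>
     (\<forall>v. d \<le> v \<and> v < N \<longrightarrow> (\<exists>u. (u,v) \<in> E)) \<and>
     (\<forall>u. u < N - 1 \<longrightarrow> (\<exists>v. (u,v) \<in> E))"

fun node_val :: "(real \<Rightarrow> real) \<Rightarrow> nat \<Rightarrow> nat \<Rightarrow> (nat \<times> nat) set \<Rightarrow> (nat \<times> nat \<Rightarrow> real)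
    \<Rightarrow> (nat \<Rightarrow> real) \<Rightarrow> (nat \<Rightarrow> real) \<Rightarrow> nat \<Rightarrow> real" where
  "node_val \<sigma> d N E w b x v =
     (if v < d then x v
      else (let s = (\<Sum>u<v. if (u,v) \<in> E then w (u,v) * node_val \<sigma> d N E w b x u else 0) + b v
            in if v = N - 1 then s else \<sigma> s))"

definition H_arch :: "(real \<Rightarrow> real) \<Rightarrow> nat \<Rightarrow> nat \<Rightarrow> (nat \<times> nat) set \<Rightarrow> ((nat \<Rightarrow> real) \<Rightarrow> real) set" where
  "H_arch \<sigma> d N E = {g. \<exists>w b. g = (\<lambda>x. node_val \<sigma> d N E w b x (N - 1))}"

definition sup_dist :: "nat \<Rightarrow> ((nat \<Rightarrow> real) \<Rightarrow> real) \<Rightarrow> ((nat \<Rightarrow> real) \<Rightarrow> real) \<Rightarrow> ereal" where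
  "sup_dist d f g = (SUP x\<in>unit_cube d. ereal \<bar>f x - g x\<bar>)"

end

theory Submission
  imports Defs
begin

declare node_val.simps[simp del]

lemma nv_unfold:
  "node_val \<sigma> d N E w b x v =
     (if v < d then x v
      else if v = N - 1 then (\<Sum>u<v. if (u,v) \<in> E then w (u,v) * node_val \<sigma> d N E w b x u else 0) + b v
      else \<sigma> ((\<Sum>u<v. if (u,v) \<in> E then w (u,v) * node_val \<sigma> d N E w b x u else 0) + b v))"
  by (subst node_val.simps) (simp add: Let_def)

lemma heav_01: "heaviside t = 0 \<or> heaviside t = 1"
  by (simp add: heaviside_def)

lemma mid_lemma:
  assumes same: "\<And>v. d \<le> v \<Longrightarrow> v < N - 1 \<Longrightarrow>
      node_val heaviside d N E w b a v = node_val heaviside d N E w b c v"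
  shows "v \<le> N - 1 \<Longrightarrow> node_val heaviside d N E w b (\<lambda>i. (a i + c i) / 2) v
        = (node_val heaviside d N E w b a v + node_val heaviside d N E w b c v) / 2"
proof (induction v rule: less_induct)
  case (less v)
  define m where "m = (\<lambda>i::nat. (a i + c i) / 2)"
  define s where "s = (\<lambda>x. (\<Sum>u<v. if (u,v) \<in> E then w (u,v) * node_val heaviside d N E w b x u else 0) + b v)"
  have IH: "\<And>u. u < v \<Longrightarrow> node_val heaviside d N E w b m u
        = (node_val heaviside d N E w b a u + node_val heaviside d N E w b c u) / 2"
    using less unfolding m_def by auto
  have sm: "s m = (s a + s c) / 2"
  proof -
    have "s m = (\<Sum>u<v. ((if (u,v) \<in> E then w (u,v) * node_val heaviside d N E w b a u else 0)
         + (if (u,v) \<in> E then w (u,v) * node_val heaviside d N E w b c u else 0)) / 2) + b v"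
      unfolding s_def by (intro arg_cong2[where f="(+)"] sum.cong refl) (auto simp: IH algebra_simps)
    also have "\<dots> = (s a + s c) / 2"
      unfolding s_def by (simp add: sum_divide_distrib[symmetric] sum.distrib field_simps)
    finally show ?thesis .
  qed
  show ?case
  proof (cases "v < d")
    case True
    then show ?thesis by (subst (1 2 3) nv_unfold) simp
  next
    case False
    show ?thesis
    proof (cases "v = N - 1")
      case True
      then show ?thesis using False sm unfolding m_def s_def by (subst (1 2 3) nv_unfold) simp
    next
      case F2: False
      have hv: "v < N - 1" using less.prems F2 by simp
      have e0: "node_val heaviside d N E w b a v = node_val heaviside d N E w b c v"
        using same[of v] False hv by simp
      have ea: "node_val heaviside d N E w b a v = heaviside (s a)"
        using False F2 unfolding s_def by (subst nv_unfold) simp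
      have ec: "node_val heaviside d N E w b c v = heaviside (s c)"
        using False F2 unfolding s_def by (subst nv_unfold) simp
      have eq: "heaviside (s a) = heaviside (s c)" using e0 ea ec by simp
      have "heaviside (s m) = heaviside (s a)"
        using eq sm by (auto simp: heaviside_def split: if_splits)
      then show ?thesis using False F2 eq unfolding m_def s_def by (subst (1 2 3) nv_unfold) simp
    qed
  qed
qed

lemma hidden_01:
  assumes "d \<le> v" "v \<noteq> N - 1"
  shows "node_val heaviside d N E w b x v = 0 \<or> node_val heaviside d N E w b x v = 1"
  using assms by (subst (1 2) nv_unfold) (simp add: heav_01)

definition f0 :: "(nat \<Rightarrow> real) \<Rightarrow> real" where
  "f0 x = (if 1 \<le> (x 0)^2 + x 1 then 1 else 0)"

definition pt :: "real \<Rightarrow> nat \<Rightarrow> real" where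
  "pt t = (\<lambda>i. if i = 0 then t else if i = 1 then 1 - t^2 else 0)"

lemma f0_mono: assumes "d \<ge> 2" shows "f0 \<in> monotone_class d"
proof -
  have "f0 x \<le> f0 y" if "x \<in> unit_cube d" "y \<in> unit_cube d" "\<forall>i<d. x i \<le> y i" for x y
  proof -
    have "x 0 \<le> y 0" "x 1 \<le> y 1" "0 \<le> x 0" using that assms by (auto simp: unit_cube_def)
    then have "(x 0)^2 \<le> (y 0)^2" by (simp add: power_mono)
    then show ?thesis using \<open>x 1 \<le> y 1\<close> by (auto simp: f0_def)
  qed
  then show ?thesis by (auto simp: monotone_class_def f0_def)
qed

lemma pt_cube: assumes "d \<ge> 2" "0 \<le> t" "t \<le> 1" shows "pt t \<in> unit_cube d"
proof -
  have "t^2 \<le> 1" using assms by (simp add: power_le_one)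
  then show ?thesis using assms by (auto simp: unit_cube_def pt_def)
qed

lemma key:
  assumes d2: "d \<ge> 2" and g: "g \<in> H_arch heaviside d N E"
  shows "sup_dist d f0 g \<ge> 1/2"
proof -
  obtain w b where gdef: "g = (\<lambda>x. node_val heaviside d N E w b x (N - 1))"
    using g by (auto simp: H_arch_def)
  define nv where "nv = (\<lambda>x v. node_val heaviside d N E w b x v)"
  define pat where "pat = (\<lambda>x. {v. d \<le> v \<and> v < N - 1 \<and> nv x v = 1})"
  have "\<not> inj_on (pat \<circ> pt) {0..1::real}"
  proof
    assume inj: "inj_on (pat \<circ> pt) {0..1::real}"
    have "(pat \<circ> pt) ` {0..1} \<subseteq> Pow {d..<N-1}" by (auto simp: pat_def)
    then have "finite ((pat \<circ> pt) ` {0..1::real})" by (rule finite_subset) simp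
    then have "finite {0..1::real}" using inj by (rule finite_imageD)
    then show False using infinite_Icc[of "0::real" 1] by simp
  qed
  then obtain t s where ts: "t \<in> {0..1}" "s \<in> {0..1}" "t \<noteq> s" "pat (pt t) = pat (pt s)"
    unfolding inj_on_def by auto
  have same: "nv (pt t) v = nv (pt s) v" if "d \<le> v" "v < N - 1" for v
  proof -
    have "v \<in> pat (pt t) \<longleftrightarrow> v \<in> pat (pt s)" using ts by simp
    then have "nv (pt t) v = 1 \<longleftrightarrow> nv (pt s) v = 1" using that by (simp add: pat_def)
    moreover have "nv (pt t) v = 0 \<or> nv (pt t) v = 1" "nv (pt s) v = 0 \<or> nv (pt s) v = 1"
      using hidden_01[of d v N] that unfolding nv_def by auto
    ultimately show ?thesis by auto
  qed
  define m where "m = (\<lambda>i. (pt t i + pt s i) / 2)"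
  have gm: "g m = (g (pt t) + g (pt s)) / 2"
    unfolding gdef m_def using mid_lemma[of d N E w b "pt t" "pt s" "N - 1"] same
    unfolding nv_def by simp
  have ft: "f0 (pt t) = 1" "f0 (pt s) = 1" by (auto simp: f0_def pt_def)
  have "(m 0)^2 + m 1 = 1 - (t - s)^2 / 4" by (simp add: m_def pt_def power2_eq_square field_simps)
  moreover have "(t - s)^2 > 0" using ts by simp
  ultimately have fm: "f0 m = 0" by (simp add: f0_def)
  have cube: "pt t \<in> unit_cube d" "pt s \<in> unit_cube d" using pt_cube[OF d2] ts by auto
  have mcube: "m \<in> unit_cube d"
  proof -
    have a: "\<forall>i<d. 0 \<le> pt t i \<and> pt t i \<le> 1" "\<forall>i\<ge>d. pt t i = 0"
         "\<forall>i<d. 0 \<le> pt s i \<and> pt s i \<le> 1" "\<forall>i\<ge>d. pt s i = 0"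
      using cube by (simp_all add: unit_cube_def)
    have "\<forall>i<d. 0 \<le> m i \<and> m i \<le> 1"
    proof (intro allI impI)
      fix i assume "i < d"
      then have "0 \<le> pt t i" "pt t i \<le> 1" "0 \<le> pt s i" "pt s i \<le> 1" using a by auto
      then show "0 \<le> m i \<and> m i \<le> 1" unfolding m_def by (simp add: field_simps)
    qed
    moreover have "\<forall>i\<ge>d. m i = 0" using a unfolding m_def by simp
    ultimately show ?thesis unfolding unit_cube_def by blast
  qed
  have "\<exists>x\<in>unit_cube d. \<bar>f0 x - g x\<bar> \<ge> 1/2"
  proof (rule ccontr)
    assume "\<not> ?thesis"
    then have "\<bar>f0 (pt t) - g (pt t)\<bar> < 1/2" "\<bar>f0 (pt s) - g (pt s)\<bar> < 1/2" "\<bar>f0 m - g m\<bar> < 1/2"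
      using cube mcube by auto
    then show False using ft fm gm by (auto simp: abs_if split: if_splits)
  qed
  then obtain x where x: "x \<in> unit_cube d" "\<bar>f0 x - g x\<bar> \<ge> 1/2" by auto
  have "ereal (1/2) \<le> ereal \<bar>f0 x - g x\<bar>" using x by simp
  also have "\<dots> \<le> sup_dist d f0 g" unfolding sup_dist_def using x by (intro SUP_upper) auto
  finally have "ereal (1/2) \<le> sup_dist d f0 g" .
  moreover have "ereal (1/2) = 1/2"
    by (metis ereal_divide one_ereal_def zero_neq_numeral numeral_eq_ereal)
  ultimately show ?thesis by simp
qed

theorem proposition4:
  fixes d N :: nat and E :: "(nat \<times> nat) set"
  assumes "d \<ge> 2" and "architecture d N E"
  shows "(SUP f\<in>monotone_class d. INF g\<in>H_arch heaviside d N E. sup_dist d f g) \<ge> 1/2"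
proof -
  have "1/2 \<le> (INF g\<in>H_arch heaviside d N E. sup_dist d f0 g)"
    using key[OF assms(1)] by (intro INF_greatest) auto
  also have "\<dots> \<le> (SUP f\<in>monotone_class d. INF g\<in>H_arch heaviside d N E. sup_dist d f g)"
    using f0_mono[OF assms(1)] by (intro SUP_upper) auto
  finally show ?thesis .
qed

end
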